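(* Let $p$ be an odd prime, $x\in\mathbb Z_p$ and $x\not\equiv-1\pmod p$. Then $$P_{\frac{p-1}2}(x)\equiv\Big(\frac{2(x+1)}p\Big)P_{\frac{p-1}2}\Big(\frac{3-x}{1+x}\Big)\pmod p.$$
   Context: $\mathbb Z_p$ denotes the set of rational numbers whose denominator (in lowest terms) is prime to $p$; congruences are in this ring. $P_n(x)$ is the $n$-th Legendre polynomial, defined by $\frac1{\sqrt{1-2xt+t^2}}=\sum_{n\ge0}P_n(x)t^n$, equivalently $P_n(x)=\frac1{2^n}\sum_{k=0}^{[n/2]}\frac{(-1)^k(2n-2k)!}{k!(n-k)!(n-2k)!}x^{n-2k}$. For $a\in\mathbb Z_p$, $\big(\frac ap\big)$ is the Legendre symbol of the residue of $a$ modulo $p$. *)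

theory Defs
  imports "HOL-Number_Theory.Number_Theory"
begin

text \<open>Z_p: rationals whose reduced denominator is prime to p.\<close>
definition in_Zp :: "int \<Rightarrow> rat \<Rightarrow> bool" where
  "in_Zp p q \<longleftrightarrow> coprime (snd (quotient_of q)) p"

definition cong_Zp :: "rat \<Rightarrow> rat \<Rightarrow> int \<Rightarrow> bool" where
  "cong_Zp a b p \<longleftrightarrow> in_Zp p ((a - b) / of_int p)"

definition Legendre_Zp :: "rat \<Rightarrow> int \<Rightarrow> int" where
  "Legendre_Zp a p = Legendre (SOME r :: int. cong_Zp a (of_int r) p) p"

definition legendre_P :: "nat \<Rightarrow> rat \<Rightarrow> rat" where
  "legendre_P n x = (1 / 2 ^ n) * (\<Sum>k = 0..n div 2.
      (-1) ^ k * of_nat (fact (2*n - 2*k)) /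
      (of_nat (fact k) * of_nat (fact (n - k)) * of_nat (fact (n - 2*k))) * x ^ (n - 2*k))"

end

theory Submission
  imports Defs "HOL-Computational_Algebra.Polynomial"
begin


lemma in_Zp_iff:
  assumes "prime p"
  shows "in_Zp p q \<longleftrightarrow> (\<exists>a b. coprime b p \<and> q = of_int a / of_int b)"
proof
  assume "in_Zp p q"
  then show "\<exists>a b. coprime b p \<and> q = of_int a / of_int b"
    unfolding in_Zp_def by (metis prod.collapse quotient_of_div)
next
  assume "\<exists>a b. coprime b p \<and> q = of_int a / of_int b"
  then obtain a b where ab: "coprime b p" "q = of_int a / of_int b" by blast
  obtain a' b' where qo: "quotient_of q = (a', b')" by (cases "quotient_of q")
  have b'pos: "b' > 0" using quotient_of_denom_pos[OF qo] .
  have cop: "coprime a' b'" using quotient_of_coprime[OF qo] .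
  have b0: "b \<noteq> 0" using ab(1) assms by (metis coprime_0_left_iff not_prime_unit)
  have "of_int a' / of_int b' = (of_int a / of_int b :: rat)" using quotient_of_div[OF qo] ab(2) by simp
  then have "of_int (a' * b) = (of_int (a * b') :: rat)" using b0 b'pos
    by (simp add: field_simps)
  then have eq: "a' * b = a * b'" by (simp only: of_int_eq_iff)
  then have "b' dvd a' * b" by simp
  then have "b' dvd b" using cop by (metis coprime_commute coprime_dvd_mult_right_iff)
  then have "coprime b' p" using ab(1) by (meson coprime_commute coprime_divisors dvd_refl)
  then show "in_Zp p q" unfolding in_Zp_def qo by simp
qed

context fixes p :: int assumes pp: "prime p"
begin

lemma Zp_int: "in_Zp p (of_int a)"
  using in_Zp_iff[OF pp] by (metis coprime_1_left div_by_1 of_int_1)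

lemma Zp_add: "in_Zp p u \<Longrightarrow> in_Zp p v \<Longrightarrow> in_Zp p (u + v)"
proof -
  assume "in_Zp p u" "in_Zp p v"
  then obtain a b c d where h: "coprime b p" "u = of_int a / of_int b" "coprime d p" "v = of_int c / of_int d"
    using in_Zp_iff[OF pp] by meson
  have b0: "b \<noteq> 0" "d \<noteq> 0" using h pp by (metis coprime_0_left_iff not_prime_unit)+
  have "u + v = of_int (a*d + c*b) / of_int (b*d)" using h b0 by (simp add: field_simps)
  moreover have "coprime (b*d) p" using h by simp
  ultimately show ?thesis using in_Zp_iff[OF pp] by blast
qed

lemma Zp_mult: "in_Zp p u \<Longrightarrow> in_Zp p v \<Longrightarrow> in_Zp p (u * v)"
proof -
  assume "in_Zp p u" "in_Zp p v"
  then obtain a b c d where h: "coprime b p" "u = of_int a / of_int b" "coprime d p" "v = of_int c / of_int d"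
    using in_Zp_iff[OF pp] by meson
  have "u * v = of_int (a*c) / of_int (b*d)" using h by simp
  moreover have "coprime (b*d) p" using h by simp
  ultimately show ?thesis using in_Zp_iff[OF pp] by blast
qed

lemma Zp_uminus: "in_Zp p u \<Longrightarrow> in_Zp p (- u)"
  using Zp_mult[OF Zp_int[of "-1"]] by simp

lemma Zp_diff: "in_Zp p u \<Longrightarrow> in_Zp p v \<Longrightarrow> in_Zp p (u - v)"
  using Zp_add Zp_uminus by (metis diff_conv_add_uminus)

lemma Zp_power: "in_Zp p u \<Longrightarrow> in_Zp p (u ^ k)"
  by (induction k) (auto intro: Zp_mult simp: Zp_int[of 1, simplified])

lemma Zp_nat: "in_Zp p (of_nat k)"
  using Zp_int[of "int k"] by simp

lemma Zp_sum: "(\<And>i. i \<in> A \<Longrightarrow> in_Zp p (f i)) \<Longrightarrow> in_Zp p (\<Sum>i\<in>A. f i)"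
  by (induction A rule: infinite_finite_induct) (auto intro: Zp_add simp: Zp_int[of 0, simplified])

lemma Zp_inv: "in_Zp p u \<Longrightarrow> \<not> in_Zp p (u / of_int p) \<Longrightarrow> in_Zp p (1 / u)"
proof -
  assume "in_Zp p u" "\<not> in_Zp p (u / of_int p)"
  then obtain a b where h: "coprime b p" "u = of_int a / of_int b"
    using in_Zp_iff[OF pp] by meson
  have "\<not> p dvd a"
  proof
    assume "p dvd a" then obtain c where "a = p * c" by blast
    then have "u / of_int p = of_int c / of_int b" using h pp by (auto simp: prime_int_iff)
    then show False using \<open>\<not> in_Zp p (u / of_int p)\<close> h in_Zp_iff[OF pp] by blast
  qed
  then have "coprime a p" using prime_imp_coprime[OF pp] coprime_commute by blast
  moreover have "1 / u = of_int b / of_int a" using h by simp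
  ultimately show ?thesis using in_Zp_iff[OF pp] by blast
qed

lemma cong_refl: "cong_Zp a a p"
  unfolding cong_Zp_def using Zp_int[of 0] by simp

lemma cong_trans: "cong_Zp a b p \<Longrightarrow> cong_Zp b c p \<Longrightarrow> cong_Zp a c p"
proof -
  assume "cong_Zp a b p" "cong_Zp b c p"
  moreover have "(a - c) / of_int p = (a - b) / of_int p + (b - c) / of_int p" by (simp add: diff_divide_distrib)
  ultimately show ?thesis unfolding cong_Zp_def using Zp_add by simp
qed

lemma cong_sym: "cong_Zp a b p \<Longrightarrow> cong_Zp b a p"
proof -
  assume "cong_Zp a b p"
  moreover have "(b - a) / of_int p = - ((a - b) / of_int p)" by (simp add: minus_divide_left)
  ultimately show ?thesis unfolding cong_Zp_def using Zp_uminus by simp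
qed

lemma cong_add: "cong_Zp a b p \<Longrightarrow> cong_Zp c d p \<Longrightarrow> cong_Zp (a + c) (b + d) p"
proof -
  assume "cong_Zp a b p" "cong_Zp c d p"
  moreover have "(a + c - (b + d)) / of_int p = (a - b) / of_int p + (c - d) / of_int p" by (simp add: diff_divide_distrib add_divide_distrib)
  ultimately show ?thesis unfolding cong_Zp_def using Zp_add by simp
qed

lemma cong_mult_left: "in_Zp p c \<Longrightarrow> cong_Zp a b p \<Longrightarrow> cong_Zp (c * a) (c * b) p"
proof -
  assume h1: "in_Zp p c" and h2: "cong_Zp a b p"
  have e: "(c * a - c * b) / of_int p = c * ((a - b) / of_int p)" by (simp add: algebra_simps)
  show ?thesis unfolding cong_Zp_def e by (rule Zp_mult[OF h1 h2[unfolded cong_Zp_def]])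
qed

lemma cong_mult: "in_Zp p a \<Longrightarrow> in_Zp p d \<Longrightarrow> cong_Zp a b p \<Longrightarrow> cong_Zp c d p \<Longrightarrow> cong_Zp (a * c) (b * d) p"
  using cong_trans cong_mult_left by (metis mult.commute)

lemma cong_power: "in_Zp p a \<Longrightarrow> in_Zp p b \<Longrightarrow> cong_Zp a b p \<Longrightarrow> cong_Zp (a ^ k) (b ^ k) p"
  by (induction k) (auto intro: cong_mult Zp_power cong_refl)

lemma cong_sum: "(\<And>i. i \<in> A \<Longrightarrow> cong_Zp (f i) (g i) p) \<Longrightarrow> cong_Zp (\<Sum>i\<in>A. f i) (\<Sum>i\<in>A. g i) p"
  by (induction A rule: infinite_finite_induct) (auto intro: cong_add cong_refl)

lemma cong_of_int: "[a = b] (mod p) \<Longrightarrow> cong_Zp (of_int a) (of_int b) p"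
proof -
  assume "[a = b] (mod p)"
  then obtain k where "a - b = p * k" by (metis cong_iff_dvd_diff cong_sym_eq dvdE)
  then have "of_int a - of_int b = (of_int p * of_int k :: rat)" by (metis of_int_diff of_int_mult)
  moreover have "p \<noteq> 0" using pp by auto
  ultimately have "(of_int a - of_int b) / of_int p = (of_int k :: rat)" by simp
  then show ?thesis unfolding cong_Zp_def using Zp_int by simp
qed

lemma cong_cancel: "in_Zp p w \<Longrightarrow> \<not> in_Zp p (w / of_int p) \<Longrightarrow> cong_Zp (w * a) (w * b) p \<Longrightarrow> cong_Zp a b p"
proof -
  assume w: "in_Zp p w" "\<not> in_Zp p (w / of_int p)" and c: "cong_Zp (w * a) (w * b) p"
  have w0: "w \<noteq> 0" using w Zp_int[of 0] by auto
  have "w * a - w * b = w * (a - b)" by (simp add: algebra_simps)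
  then have "(a - b) / of_int p = (1 / w) * ((w * a - w * b) / of_int p)" using w0 by simp
  moreover have "in_Zp p ((1/w) * ((w*a - w*b)/of_int p))" by (rule Zp_mult[OF Zp_inv[OF w] c[unfolded cong_Zp_def]])
  ultimately show ?thesis unfolding cong_Zp_def by simp
qed

lemma exists_int_rep: "in_Zp p q \<Longrightarrow> \<exists>r. cong_Zp q (of_int r) p"
proof -
  assume "in_Zp p q"
  then obtain a b where h: "coprime b p" "q = of_int a / of_int b"
    using in_Zp_iff[OF pp] by meson
  obtain u v where uv: "u * b + v * p = 1" using h(1) by (metis bezout_int gcd_eq_1_imp_coprime coprime_iff_gcd_eq_1)
  have b0: "b \<noteq> 0" using h pp by (metis coprime_0_left_iff not_prime_unit)
  have p0: "p \<noteq> 0" using pp by auto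
  have "(q - of_int (a*u)) / of_int p = of_int (a * v) / of_int b"
  proof -
    have "of_int (u * b) = (1 - of_int (v*p) :: rat)" using uv by (metis add_diff_cancel_right' of_int_1 of_int_diff)
    then have e: "of_int u * of_int b = (1 - of_int v * of_int p :: rat)" by simp
    have "(q - of_int (a*u)) * of_int b = of_int a - of_int a * (of_int u * of_int b)" using b0 p0 h(2) by (simp add: field_simps)
    also have "\<dots> = of_int a * of_int v * of_int p" unfolding e by (simp add: algebra_simps)
    finally show ?thesis using b0 p0 by (simp add: field_simps)
  qed
  then show ?thesis unfolding cong_Zp_def using in_Zp_iff[OF pp] h by blast
qed

end



lemma binom_d: "Suc i * (n choose Suc i) = (n - i) * (n choose i)"
  using binomial_absorption[of i n] binomial_absorb_comp[of n i] by simp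

lemma binom_c: "Suc i * (n + Suc i choose Suc i) = (n + Suc i) * (n + i choose i)"
  using Suc_times_binomial_eq[of "n+i" i] by simp

lemma binom_cong:
  fixes p :: int
  assumes pp: "prime p" and pn: "p = 2 * int n + 1" and i: "i \<le> n"
  shows "p dvd (int (n + i choose i) - (-1)^i * int (n choose i))"
  using i
proof (induction i)
  case 0 then show ?case by simp
next
  case (Suc i)
  then have "p dvd (int (n + i choose i) - (-1)^i * int (n choose i))" by simp
  then obtain t where "int (n + i choose i) - (-1)^i * int (n choose i) = p * t" by (elim dvdE)
  then have t: "int (n + i choose i) = (-1)^i * int (n choose i) + p * t" by simp
  have c: "int (Suc i) * int (n + Suc i choose Suc i) = int (n + Suc i) * int (n + i choose i)"
    using binom_c[of i n] by (metis of_nat_mult)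
  have d: "int (Suc i) * int (n choose Suc i) = int (n - i) * int (n choose i)"
    using binom_d[of i n] by (metis of_nat_mult)
  have ni: "int (n - i) = int n - int i" using Suc.prems by simp
  have "int (Suc i) * (int (n + Suc i choose Suc i) - (-1)^Suc i * int (n choose Suc i))
        = int (n + Suc i) * int (n + i choose i) + (-1)^i * (int (Suc i) * int (n choose Suc i))"
    using c by (simp add: algebra_simps)
  also have "\<dots> = p * ((-1)^i * int (n choose i) + int (n + Suc i) * t)"
    unfolding d t ni pn by (simp add: algebra_simps)
  finally have "p dvd int (Suc i) * (int (n + Suc i choose Suc i) - (-1)^Suc i * int (n choose Suc i))"
    by (metis dvd_triv_left)
  moreover have "\<not> p dvd int (Suc i)"
  proof
    assume "p dvd int (Suc i)"
    then have "p \<le> int (Suc i)" by (simp add: zdvd_imp_le)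
    then show False using Suc.prems pn by simp
  qed
  ultimately show ?case using pp prime_dvd_mult_iff by blast
qed

lemma coeff_lin_pow: "coeff ([:a, 1:] ^ m) i = of_nat (m choose i) * (a::'a::comm_ring_1) ^ (m - i)"
proof (cases "i \<le> m")
  case True then show ?thesis using coeff_linear_poly_power[OF True, of a 1] by simp
next
  case False
  then have "coeff ([:a, 1:] ^ m) i = 0" by (intro coeff_eq_0) (simp add: degree_linear_power)
  then show ?thesis using False by (simp add: binomial_eq_0)
qed

lemma coeff_prod_pow: "coeff ([:a, 1:] ^ n * [:b, 1:] ^ n) n = (\<Sum>i\<le>n. of_nat ((n choose i)^2) * a ^ (n - i) * (b::'a::comm_ring_1) ^ i)"
  unfolding coeff_mult coeff_lin_pow
  by (intro sum.cong refl) (simp add: binomial_symmetric[symmetric] power2_eq_square algebra_simps)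

lemma mult_const_right: "p * [:c:] = smult c p"
  by (subst mult.commute) simp

lemma binom_swap: "(a + b choose b) = (a + b choose a)"
  using binomial_symmetric[of b "a + b"] by simp

lemma shift_coeff:
  "coeff ([:a, 1:] ^ n * [:a + 2, 1:] ^ n) n = (\<Sum>i\<le>n. of_nat (n choose i) * 2 ^ (n - i) * of_nat (n + i choose i) * (a::'a::comm_ring_1) ^ i)"
proof -
  have e: "[:a + 2, 1:] = [:a, 1:] + [:2:]" by simp
  have "[:a, 1:] ^ n * [:a + 2, 1:] ^ n = (\<Sum>k\<le>n. smult (2 ^ (n - k) * of_nat (n choose k)) ([:a, 1:] ^ (n + k)))"
    unfolding e binomial_ring sum_distrib_left
    by (intro sum.cong refl) (simp add: of_nat_poly power_add poly_const_pow mult_const_right)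
  then show ?thesis
    by (simp add: coeff_sum coeff_lin_pow binom_swap[where b=n] algebra_simps)
qed

lemma legendre_coeff:
  "2 ^ n * legendre_P n z = coeff ([:z - 1, 1:] ^ n * [:z + 1, 1:] ^ n) n"
proof -
  have e: "[:z - 1, 1:] * [:z + 1, 1:] = [:-1:] + [:z, 1:] ^ 2"
    by (simp add: power2_eq_square algebra_simps)
  have "[:z - 1, 1:] ^ n * [:z + 1, 1:] ^ n = (\<Sum>k\<le>n. smult ((-1) ^ k * of_nat (n choose k)) ([:z, 1:] ^ (2 * (n - k))))"
    unfolding power_mult_distrib[symmetric] e binomial_ring
    by (intro sum.cong refl) (simp add: of_nat_poly power_mult[symmetric] poly_const_pow mult_const_right)
  then have r: "coeff ([:z - 1, 1:] ^ n * [:z + 1, 1:] ^ n) n =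
      (\<Sum>k\<le>n. of_nat (n choose k) * (-1) ^ k * (of_nat (2 * (n - k) choose n) * z ^ (2 * (n - k) - n)))"
    by (simp add: coeff_sum coeff_lin_pow) (simp add: mult_ac)
  have split: "(\<Sum>k\<le>n. of_nat (n choose k) * (-1) ^ k * (of_nat (2 * (n - k) choose n) * z ^ (2 * (n - k) - n)))
      = (\<Sum>k=0..n div 2. of_nat (n choose k) * (-1) ^ k * (of_nat (2 * (n - k) choose n) * z ^ (2 * (n - k) - n)))"
    by (rule sum.mono_neutral_right) (auto simp: binomial_eq_0)
  have "2 ^ n * legendre_P n z = (\<Sum>k = 0..n div 2.
      (-1) ^ k * of_nat (fact (2*n - 2*k)) /
      (of_nat (fact k) * of_nat (fact (n - k)) * of_nat (fact (n - 2*k))) * z ^ (n - 2*k))"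
    unfolding legendre_P_def by simp
  also have "\<dots> = (\<Sum>k=0..n div 2. of_nat (n choose k) * (-1) ^ k * (of_nat (2 * (n - k) choose n) * z ^ (2 * (n - k) - n)))"
  proof (intro sum.cong refl)
    fix k assume k: "k \<in> {0..n div 2}"
    then have kn: "k \<le> n" "n \<le> 2 * (n - k)" by auto
    have a: "2 * (n - k) - n = n - 2 * k" "2 * (n - k) = 2 * n - 2 * k" "2 * n - 2 * k - n = n - 2 * k" using kn by auto
    show "(-1) ^ k * of_nat (fact (2*n - 2*k)) /
      (of_nat (fact k) * of_nat (fact (n - k)) * of_nat (fact (n - 2*k))) * z ^ (n - 2*k) =
      of_nat (n choose k) * (-1) ^ k * (of_nat (2 * (n - k) choose n) * z ^ (2 * (n - k) - n))"
    proof -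
      have b1: "(of_nat (n choose k)::rat) = fact n / (fact k * fact (n - k))" by (rule binomial_fact[OF kn(1)])
      have b2: "(of_nat (2*(n-k) choose n)::rat) = fact (2*n-2*k) / (fact n * fact (n-2*k))"
        using binomial_fact[OF kn(2), where 'a=rat] a by simp
      show ?thesis unfolding b1 b2 a(1) by (simp add: field_simps)
    qed
  qed
  finally show ?thesis using r split by simp
qed



context fixes p :: int assumes pp: "prime p"
begin

lemma not_Zp_div: "\<not> p dvd m \<Longrightarrow> \<not> in_Zp p (of_int m / of_int p)"
proof
  assume nd: "\<not> p dvd m" and "in_Zp p (of_int m / of_int p)"
  then obtain a b where h: "coprime b p" "of_int m / of_int p = (of_int a / of_int b :: rat)"
    using in_Zp_iff[OF pp] by meson
  have b0: "b \<noteq> 0" using h pp by (metis coprime_0_left_iff not_prime_unit)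
  have p0: "p \<noteq> 0" using pp by auto
  have "of_int (m * b) = (of_int (a * p) :: rat)" using h(2) b0 p0 by (simp add: field_simps)
  then have "m * b = a * p" by (simp only: of_int_eq_iff)
  then have "p dvd m * b" by (metis dvd_triv_right)
  then have "p dvd b" using nd pp prime_dvd_mult_iff by blast
  then show False using h(1) pp by (metis coprime_common_divisor dvd_refl not_prime_unit)
qed

lemma nonunit_mult: "in_Zp p u \<Longrightarrow> \<not> in_Zp p (u / of_int p) \<Longrightarrow> \<not> in_Zp p (v / of_int p) \<Longrightarrow> \<not> in_Zp p (u * v / of_int p)"
proof
  assume u: "in_Zp p u" "\<not> in_Zp p (u / of_int p)" and v: "\<not> in_Zp p (v / of_int p)" and uv: "in_Zp p (u * v / of_int p)"
  have u0: "u \<noteq> 0" using u Zp_int[OF pp, of 0] by auto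
  have "v / of_int p = (1 / u) * (u * v / of_int p)" using u0 by simp
  moreover have "in_Zp p ((1 / u) * (u * v / of_int p))" by (rule Zp_mult[OF pp Zp_inv[OF pp u] uv])
  ultimately show False using v u0 by simp
qed

lemma nonunit_power: "in_Zp p u \<Longrightarrow> \<not> in_Zp p (u / of_int p) \<Longrightarrow> \<not> in_Zp p (u ^ k / of_int p)"
proof (induction k)
  case 0 then show ?case using not_Zp_div[of 1] pp by (simp add: prime_int_iff)
next
  case (Suc k) then show ?case using nonunit_mult[of u "u^k"] by simp
qed

end


lemma int_cong_key:
  fixes p :: int
  assumes pp: "prime p" and pn: "p = 2 * int n + 1" and i: "i \<le> n"
  shows "[int (n + i choose i) = (-1)^i * int (n choose i) * 4 ^ n] (mod p)"
proof -
  have d1: "p dvd (int (n + i choose i) - (-1)^i * int (n choose i))" by (rule binom_cong[OF pp pn i])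
  have ip: "int (nat p) = p" using pn by simp
  then have "prime (int (nat p))" using pp by (simp only:)
  then have P: "prime (nat p)" by (simp only: prime_int_nat_transfer nat_int)
  have np: "\<not> nat p dvd 2"
  proof
    assume "nat p dvd 2" then have "nat p \<le> 2" by (simp add: dvd_imp_le)
    then show False using pn pp by (cases n) auto
  qed
  have "[2 ^ (nat p - 1) = 1] (mod nat p)" by (rule fermat_theorem[OF P np])
  moreover have "nat p - 1 = 2 * n" using pn by simp
  ultimately have "[(4::nat) ^ n = 1] (mod nat p)" by (simp add: power_mult)
  then have "[int (4 ^ n) = int 1] (mod int (nat p))" by (simp only: cong_int_iff)
  then have "[4 ^ n = 1] (mod p)" using pn by simp
  then have d2: "p dvd (4 ^ n - 1)" by (simp add: cong_iff_dvd_diff)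
  have E: "int (n + i choose i) - (-1)^i * int (n choose i) * 4 ^ n =
        (int (n + i choose i) - (-1)^i * int (n choose i)) - (-1)^i * int (n choose i) * (4 ^ n - 1)"
    by (simp add: algebra_simps)
  have "p dvd ((int (n + i choose i) - (-1)^i * int (n choose i)) - (-1)^i * int (n choose i) * (4 ^ n - 1))"
    by (rule dvd_diff[OF d1 dvd_mult[OF d2]])
  then have "p dvd (int (n + i choose i) - (-1)^i * int (n choose i) * 4 ^ n)" by (simp only: E)
  then show ?thesis by (simp only: cong_iff_dvd_diff)
qed

theorem theorem2p6:
  fixes p :: int and x :: rat
  assumes "prime p" and "odd p"
    and "in_Zp p x"
    and "\<not> cong_Zp x (-1) p"
  shows "cong_Zp (legendre_P (nat ((p - 1) div 2)) x)
           (of_int (Legendre_Zp (2 * (x + 1)) p) *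
            legendre_P (nat ((p - 1) div 2)) ((3 - x) / (1 + x))) p"
proof -
  note pp = assms(1)
  define n where "n = nat ((p - 1) div 2)"
  have p1: "p > 1" using pp by (simp add: prime_gt_1_int)
  have pn: "p = 2 * int n + 1" using assms(2) p1 unfolding n_def by (auto elim!: oddE)
  define y where "y = (3 - x) / (1 + x)"
  define S where "S z = coeff ([:z - 1, 1:] ^ n * [:z + 1, 1:] ^ n) n" for z :: rat
  define U where "U = (\<Sum>i\<le>n. of_nat ((n choose i)^2) * 4 ^ (n - i) * (2 * (1 - x)) ^ i :: rat)"
  define L where "L = Legendre_Zp (2 * (x + 1)) p"
  have x1: "in_Zp p (1 + x)" using Zp_add[OF pp Zp_int[OF pp, of 1] assms(3)] by simp
  have nz: "\<not> in_Zp p ((1 + x) / of_int p)" using assms(4) unfolding cong_Zp_def by (simp add: add.commute)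
  have x0: "1 + x \<noteq> 0" using nz Zp_int[OF pp, of 0] by auto
  have Px: "2 ^ n * legendre_P n x = S x" unfolding S_def by (rule legendre_coeff)
  have Py: "2 ^ n * legendre_P n y = S y" unfolding S_def by (rule legendre_coeff)
  have U: "(1 + x) ^ n * S y = U"
  proof -
    have Sy: "S y = (\<Sum>i\<le>n. of_nat ((n choose i)^2) * (y + 1) ^ (n - i) * (y - 1) ^ i)"
      unfolding S_def by (subst mult.commute) (rule coeff_prod_pow)
    have "(1 + x) ^ n * S y = (\<Sum>i\<le>n. of_nat ((n choose i)^2) * ((y + 1) * (1 + x)) ^ (n - i) * ((y - 1) * (1 + x)) ^ i)"
      unfolding Sy sum_distrib_left
    proof (intro sum.cong refl)
      fix i assume "i \<in> {..n}"
      then have "(1 + x) ^ n = (1 + x) ^ (n - i) * (1 + x) ^ i" by (simp flip: power_add)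
      then show "(1 + x) ^ n * (of_nat ((n choose i)^2) * (y + 1) ^ (n - i) * (y - 1) ^ i) =
          of_nat ((n choose i)^2) * ((y + 1) * (1 + x)) ^ (n - i) * ((y - 1) * (1 + x)) ^ i"
        by (simp add: power_mult_distrib mult_ac)
    qed
    also have "\<dots> = U" unfolding U_def
    proof (intro sum.cong refl)
      fix i
      have "(y + 1) * (1 + x) = 4" "(y - 1) * (1 + x) = 2 * (1 - x)"
        unfolding y_def using x0 by (simp_all add: field_simps)
      then show "of_nat ((n choose i)^2) * ((y + 1) * (1 + x)) ^ (n - i) * ((y - 1) * (1 + x)) ^ i =
          of_nat ((n choose i)^2) * 4 ^ (n - i) * (2 * (1 - x)) ^ i" by simp
    qed
    finally show ?thesis .
  qed
  have Sx: "S x = (\<Sum>i\<le>n. of_nat (n choose i) * 2 ^ (n - i) * of_nat (n + i choose i) * (x - 1) ^ i)"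
  proof -
    have "[:x + 1, 1:] = [:(x - 1) + 2, 1:]" by simp
    then show ?thesis unfolding S_def by (simp only: shift_coeff)
  qed
  have SU: "cong_Zp (S x) (2 ^ n * U) p"
  proof -
    have eqU: "2 ^ n * U = (\<Sum>i\<le>n. (of_nat (n choose i) * 2 ^ (n - i) * (x - 1) ^ i) *
                 of_int ((-1)^i * int (n choose i) * 4 ^ n))"
      unfolding U_def sum_distrib_left
    proof (intro sum.cong refl)
      fix i assume "i \<in> {..n}"
      then have i: "i \<le> n" by simp
      have e1: "(2::rat) ^ n * 4 ^ (n - i) * 2 ^ i = 2 ^ (n - i) * 4 ^ n"
      proof -
        have f: "(4::rat) ^ m = 2 ^ (2 * m)" for m by (simp add: power_mult)
        have "(2::rat) ^ n * 4 ^ (n - i) * 2 ^ i = 2 ^ (n + 2 * (n - i) + i)"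
          unfolding f by (simp only: power_add)
        also have "n + 2 * (n - i) + i = (n - i) + 2 * n" using i by simp
        finally show ?thesis unfolding f by (simp only: power_add)
      qed
      have "2 * (1 - x) = 2 * (-1) * (x - 1)" by simp
      then have e2: "(2 * (1 - x)) ^ i = 2 ^ i * (-1) ^ i * (x - 1) ^ i"
        by (simp only: power_mult_distrib)
      show "2 ^ n * (of_nat ((n choose i)\<^sup>2) * 4 ^ (n - i) * (2 * (1 - x)) ^ i) =
            of_nat (n choose i) * 2 ^ (n - i) * (x - 1) ^ i * of_int ((-1)^i * int (n choose i) * 4 ^ n)"
      proof -
        have "2 ^ n * (of_nat ((n choose i)\<^sup>2) * 4 ^ (n - i) * (2 ^ i * (-1) ^ i * (x - 1) ^ i)) =
          (of_nat (n choose i) * of_nat (n choose i) * (-1) ^ i * (x - 1) ^ i) * ((2::rat) ^ n * 4 ^ (n - i) * 2 ^ i)"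
          by (simp add: power2_eq_square mult_ac)
        also have "\<dots> = (of_nat (n choose i) * of_nat (n choose i) * (-1) ^ i * (x - 1) ^ i) * (2 ^ (n - i) * 4 ^ n)"
          by (simp only: e1)
        also have "\<dots> = of_nat (n choose i) * 2 ^ (n - i) * (x - 1) ^ i * of_int ((-1)^i * int (n choose i) * 4 ^ n)"
          by (simp add: mult_ac)
        finally show ?thesis unfolding e2 .
      qed
    qed
    have cS: "cong_Zp (S x) (\<Sum>i\<le>n. (of_nat (n choose i) * 2 ^ (n - i) * (x - 1) ^ i) *
                 of_int ((-1)^i * int (n choose i) * 4 ^ n)) p"
      unfolding Sx
    proof (rule cong_sum[OF pp])
      fix i assume "i \<in> {..n}"
      then have i: "i \<le> n" by simp
      have c: "in_Zp p (of_nat (n choose i) * 2 ^ (n - i) * (x - 1) ^ i)"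
        by (intro Zp_mult[OF pp] Zp_nat[OF pp] Zp_power[OF pp] Zp_diff[OF pp] assms(3))
          (use Zp_int[OF pp, of 2] Zp_int[OF pp, of 1] in auto)
      have "cong_Zp (of_int (int (n + i choose i))) (of_int ((-1)^i * int (n choose i) * 4 ^ n)) p"
        by (rule cong_of_int[OF pp int_cong_key[OF pp pn i]])
      from cong_mult_left[OF pp c this]
      show "cong_Zp (of_nat (n choose i) * 2 ^ (n - i) * of_nat (n + i choose i) * (x - 1) ^ i)
          ((of_nat (n choose i) * 2 ^ (n - i) * (x - 1) ^ i) * of_int ((-1)^i * int (n choose i) * 4 ^ n)) p"
        by (simp add: mult_ac)
    qed
    show ?thesis unfolding eqU by (rule cS)
  qed
  define q where "q = 2 * (x + 1)"
  have "q = of_int 2 * (1 + x)" unfolding q_def by simp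
  then have qZ: "in_Zp p q" using Zp_mult[OF pp Zp_int[OF pp, of 2] x1] by simp
  define r where "r = (SOME r :: int. cong_Zp q (of_int r) p)"
  have r: "cong_Zp q (of_int r) p" unfolding r_def by (rule someI_ex[OF exists_int_rep[OF pp qZ]])
  have Lr: "L = Legendre r p" unfolding L_def Legendre_Zp_def r_def q_def by (rule refl)
  have ip: "int (nat p) = p" using p1 by simp
  then have "prime (int (nat p))" using pp by (simp only:)
  then have P: "prime (nat p)" by (simp only: prime_int_nat_transfer nat_int)
  have "[Legendre r (int (nat p)) = r ^ ((nat p - 1) div 2)] (mod int (nat p))"
    by (rule euler_criterion[OF P]) (use pn p1 in auto)
  moreover have nd: "(nat p - 1) div 2 = n" using pn by simp
  ultimately have "[Legendre r p = r ^ n] (mod p)" by (simp only: ip)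
  then have "[L = r ^ n] (mod p)" by (simp only: Lr)
  then have "cong_Zp (of_int L) (of_int (r ^ n)) p" by (rule cong_of_int[OF pp])
  then have c1: "cong_Zp (of_int L) (of_int r ^ n) p" by (simp only: of_int_power)
  have c2: "cong_Zp (of_int r ^ n) (q ^ n) p"
    by (rule cong_power[OF pp Zp_int[OF pp] qZ cong_sym[OF pp r]])
  have Lq: "cong_Zp (q ^ n) (of_int L) p"
    by (rule cong_sym[OF pp cong_trans[OF pp c1 c2]])
  have UZ: "in_Zp p U" unfolding U_def
    by (intro Zp_sum[OF pp] Zp_mult[OF pp] Zp_nat[OF pp] Zp_power[OF pp] Zp_diff[OF pp] assms(3))
      (use Zp_int[OF pp, of 4] Zp_int[OF pp, of 2] Zp_int[OF pp, of 1] in auto)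
  define w where "w = 2 ^ n * (1 + x) ^ n"
  have wZ: "in_Zp p w" unfolding w_def
    by (intro Zp_mult[OF pp] Zp_power[OF pp] x1) (use Zp_int[OF pp, of 2] in auto)
  have two: "\<not> in_Zp p (2 / of_int p)"
  proof -
    have "\<not> p dvd 2"
    proof
      assume "p dvd 2" then have "p \<le> 2" by (simp add: zdvd_imp_le)
      then have "p = 2" using p1 by simp
      then show False using assms(2) by simp
    qed
    then show ?thesis using not_Zp_div[OF pp, of 2] by simp
  qed
  have z2: "in_Zp p 2" using Zp_int[OF pp, of 2] by simp
  have wa: "\<not> in_Zp p (2 ^ n / of_int p)" by (rule nonunit_power[OF pp z2 two])
  have wb: "\<not> in_Zp p ((1 + x) ^ n / of_int p)" by (rule nonunit_power[OF pp x1 nz])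
  have wnz: "\<not> in_Zp p (w / of_int p)" unfolding w_def
    by (rule nonunit_mult[OF pp Zp_power[OF pp z2] wa wb])
  have c1: "cong_Zp ((1 + x) ^ n * S x) ((1 + x) ^ n * (2 ^ n * U)) p"
    by (rule cong_mult_left[OF pp Zp_power[OF pp x1] SU])
  have c2: "cong_Zp (U * q ^ n) (U * of_int L) p"
    by (rule cong_mult_left[OF pp UZ Lq])
  have e1: "w * legendre_P n x = (1 + x) ^ n * S x" unfolding w_def Px[symmetric] by simp
  have qn: "q ^ n = 2 ^ n * (1 + x) ^ n" unfolding q_def add.commute[of x 1] by (rule power_mult_distrib)
  have e2: "(1 + x) ^ n * (2 ^ n * U) = U * q ^ n" unfolding qn by (simp only: mult_ac)
  have e3: "w * (of_int L * legendre_P n y) = U * of_int L"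
    unfolding w_def U[symmetric] Py[symmetric] by (simp add: mult_ac)
  have "cong_Zp (w * legendre_P n x) (w * (of_int L * legendre_P n y)) p"
    unfolding e1 e3 using cong_trans[OF pp c1[unfolded e2] c2] .
  then have "cong_Zp (legendre_P n x) (of_int L * legendre_P n y) p"
    by (rule cong_cancel[OF pp wZ wnz])
  then show ?thesis unfolding n_def L_def y_def .
qed


end
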